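(* Consider the delayed online learning protocol of the context. Assume the maximum delay is bounded by $\tau$, i.e. $\{1,\dots,t-\tau-1\}\subset\mathcal S_t$ for all $t$, and that $\|g_t\|_*\le G$ for all $t$. Let DDA be run with learning rates $\eta_t=\dfrac{r}{G\sqrt{t(1+2\tau)}}$. Then for every $p\in\mathcal X$ with $h(p)\le r^2$, \[R_T(p)\le 2rG\sqrt{T(1+2\tau)}.\]
   Context: Let $\mathcal V$ be a finite-dimensional real vector space with norm $\|\cdot\|$ and dual norm $\|\cdot\|_*$, and $\mathcal X\subset\mathcal V$ closed convex. A regularizer $h:\mathcal V\to\mathbb R\cup\{+\infty\}$ is lower semicontinuous, $1$-strongly convex w.r.t. $\|\cdot\|$ on $\mathcal X$, with $\mathcal X\subset\operatorname{dom}h$, whose subdifferential admits a continuous selection, and $h\ge0$. Protocol: at each round $t=1,\dots,T$ one agent $i(t)$ is active, plays $x_t\in\mathcal X$, incurs $f_t(x_t)$ ($f_t$ convex, $\mathcal X\subset\operatorname{dom}\partial f_t$); a subgradient $g_t\in\partial f_t(x_t)$ is revealed later. $\mathcal S^i_t\subset\{1,\dots,t-1\}$: timestamps of subgradients available to agent $i$ at time $t$, nondecreasing in $t$; $\mathcal S_t=\mathcal S^{i(t)}_t$. DDA: $x_t=\arg\min_{x\in\mathcal X}\{\sum_{s\in\mathcal S_t}\langle g_s,x\rangle+h(x)/\eta_t\}$. Regret: $R_T(p)=\sum_{t=1}^T f_t(x_t)-\sum_{t=1}^T f_t(p)$. Here $r>0$ and $G>0$ are constants. *)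

theory Defs
  imports "HOL-Analysis.Analysis"
begin

text \<open>The finite-dimensional real vector space V is modelled by a type of class
  euclidean_space; its inner product only serves as the duality pairing between V and V*.
  The (arbitrary) norm on V is a separate function N.\<close>

definition is_norm :: "('a::real_vector \<Rightarrow> real) \<Rightarrow> bool" where
  "is_norm N \<longleftrightarrow> (\<forall>x. 0 \<le> N x) \<and> (\<forall>x. N x = 0 \<longleftrightarrow> x = 0)
     \<and> (\<forall>c x. N (c *\<^sub>R x) = \<bar>c\<bar> * N x) \<and> (\<forall>x y. N (x + y) \<le> N x + N y)"

definition dual_norm :: "('a::real_inner \<Rightarrow> real) \<Rightarrow> 'a \<Rightarrow> real" where
  "dual_norm N g = Sup {g \<bullet> x | x. N x \<le> 1}"

definition edom :: "('a \<Rightarrow> ereal) \<Rightarrow> 'a set" where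
  "edom f = {x. f x < \<infinity>}"

definition proper_ext :: "('a \<Rightarrow> ereal) \<Rightarrow> bool" where
  "proper_ext f \<longleftrightarrow> (\<forall>x. f x \<noteq> -\<infinity>)"

definition lsc_ext :: "('a::topological_space \<Rightarrow> ereal) \<Rightarrow> bool" where
  "lsc_ext f \<longleftrightarrow> (\<forall>c. closed {x. f x \<le> c})"

definition convex_ext :: "('a::real_vector \<Rightarrow> ereal) \<Rightarrow> bool" where
  "convex_ext f \<longleftrightarrow> proper_ext f \<and> convex (edom f)
     \<and> convex_on (edom f) (\<lambda>x. real_of_ereal (f x))"

definition subdiff :: "('a::real_inner \<Rightarrow> ereal) \<Rightarrow> 'a \<Rightarrow> 'a set" where
  "subdiff f x = {g. f x \<noteq> \<infinity> \<and> f x \<noteq> -\<infinity> \<and>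
                     (\<forall>y. f x + ereal (g \<bullet> (y - x)) \<le> f y)}"

definition dom_subdiff :: "('a::real_inner \<Rightarrow> ereal) \<Rightarrow> 'a set" where
  "dom_subdiff f = {x. subdiff f x \<noteq> {}}"

text \<open>1-strong convexity with respect to N on a set X (X \<subseteq> dom h assumed separately).\<close>
definition strongly_convex_on :: "'a set \<Rightarrow> ('a::real_vector \<Rightarrow> real) \<Rightarrow> ('a \<Rightarrow> ereal) \<Rightarrow> bool" where
  "strongly_convex_on X N h \<longleftrightarrow>
     (\<forall>x\<in>X. \<forall>y\<in>X. \<forall>t::real. 0 \<le> t \<and> t \<le> 1 \<longrightarrow>
        real_of_ereal (h (t *\<^sub>R x + (1 - t) *\<^sub>R y))
          \<le> t * real_of_ereal (h x) + (1 - t) * real_of_ereal (h y)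
             - t * (1 - t) / 2 * (N (x - y))\<^sup>2)"

definition has_continuous_subgrad_selection :: "('a::real_inner \<Rightarrow> ereal) \<Rightarrow> bool" where
  "has_continuous_subgrad_selection h \<longleftrightarrow>
     (\<exists>\<sigma>. continuous_on (dom_subdiff h) \<sigma> \<and> (\<forall>x\<in>dom_subdiff h. \<sigma> x \<in> subdiff h x))"

definition is_argmin_on :: "'a set \<Rightarrow> ('a \<Rightarrow> real) \<Rightarrow> 'a \<Rightarrow> bool" where
  "is_argmin_on X L x \<longleftrightarrow> x \<in> X \<and> (\<forall>y\<in>X. L x \<le> L y)"

end

theory Submission
  imports Defs
begin


lemma N_basic:
  assumes "is_norm N"
  shows "N 0 = 0" "N (- x) = N x" "N (x - y) = N (y - x)" "N (x + y) \<le> N x + N y"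
    "N (c *\<^sub>R x) = \<bar>c\<bar> * N x" "0 \<le> N x" "N x = 0 \<longleftrightarrow> x = 0"
proof -
  show "N 0 = 0" "N (x + y) \<le> N x + N y" "N (c *\<^sub>R x) = \<bar>c\<bar> * N x" "0 \<le> N x" "N x = 0 \<longleftrightarrow> x = 0"
    using assms unfolding is_norm_def by auto
  have neg: "N (- z) = N z" for z
  proof -
    have "N ((-1) *\<^sub>R z) = \<bar>-1\<bar> * N z" using assms unfolding is_norm_def by blast
    then show ?thesis by simp
  qed
  show "N (- x) = N x" by (rule neg)
  show "N (x - y) = N (y - x)" using neg[of "y - x"] by simp
qed

lemma N_sum:
  assumes "is_norm N" "finite A"
  shows "N (sum f A) \<le> (\<Sum>i\<in>A. N (f i))"
  using assms(2)
proof (induction A rule: finite_induct)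
  case empty then show ?case by (simp add: N_basic(1)[OF assms(1)])
next
  case (insert a A)
  then show ?case using N_basic(4)[OF assms(1), of "f a" "sum f A"] by simp
qed

lemma N_upper:
  fixes N :: "'a::euclidean_space \<Rightarrow> real"
  assumes "is_norm N"
  shows "N x \<le> (\<Sum>b\<in>Basis. N b) * norm x"
proof -
  have "N x = N (\<Sum>b\<in>Basis. (x \<bullet> b) *\<^sub>R b)" by (simp add: euclidean_representation)
  also have "\<dots> \<le> (\<Sum>b\<in>Basis. N ((x \<bullet> b) *\<^sub>R b))" by (rule N_sum[OF assms]) simp
  also have "\<dots> = (\<Sum>b\<in>Basis. \<bar>x \<bullet> b\<bar> * N b)" using N_basic(5)[OF assms] by simp
  also have "\<dots> \<le> (\<Sum>b\<in>Basis. norm x * N b)"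
    by (rule sum_mono) (simp add: Basis_le_norm N_basic(6)[OF assms] mult_right_mono)
  also have "\<dots> = (\<Sum>b\<in>Basis. N b) * norm x" by (simp add: sum_distrib_left mult.commute)
  finally show ?thesis .
qed

lemma N_lower:
  fixes N :: "'a::euclidean_space \<Rightarrow> real"
  assumes "is_norm N"
  shows "\<exists>m>0. \<forall>x. m * norm x \<le> N x"
proof -
  define C where "C = (\<Sum>b\<in>Basis. N b)"
  have C0: "0 \<le> C" unfolding C_def by (rule sum_nonneg) (simp add: N_basic(6)[OF assms])
  have "C-lipschitz_on (sphere 0 1) N"
  proof (rule lipschitz_onI)
    fix x y :: 'a
    have "N x \<le> N y + N (x - y)" using N_basic(4)[OF assms, of y "x - y"] by simp
    moreover have "N y \<le> N x + N (y - x)" using N_basic(4)[OF assms, of x "y - x"] by simp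
    moreover have "N (x - y) \<le> C * dist x y" using N_upper[OF assms, of "x - y"] by (simp add: C_def dist_norm)
    moreover have "N (y - x) = N (x - y)" using N_basic(3)[OF assms] by simp
    ultimately show "dist (N x) (N y) \<le> C * dist x y" by (simp add: dist_real_def abs_le_iff)
  qed (rule C0)
  then have cont: "continuous_on (sphere 0 1) N" by (rule lipschitz_on_continuous_on)
  obtain b :: 'a where b: "b \<in> Basis" using nonempty_Basis by blast
  then have "b \<in> sphere 0 1" by simp
  then obtain x0 where x0: "x0 \<in> sphere 0 1" "\<forall>y\<in>sphere 0 1. N x0 \<le> N y"
    using continuous_attains_inf[OF compact_sphere _ cont] by blast
  have "x0 \<noteq> 0" using x0 by auto
  then have m0: "N x0 > 0" using N_basic(6,7)[OF assms, of x0] by linarith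
  have "N x0 * norm x \<le> N x" for x
  proof (cases "x = 0")
    case True then show ?thesis using N_basic(1)[OF assms] by simp
  next
    case False
    have "(inverse (norm x)) *\<^sub>R x \<in> sphere 0 1" using False by simp
    then have "N x0 \<le> N ((inverse (norm x)) *\<^sub>R x)" using x0 by blast
    also have "\<dots> = inverse (norm x) * N x" using N_basic(5)[OF assms] by simp
    finally show ?thesis using False by (simp add: field_simps)
  qed
  then show ?thesis using m0 by blast
qed

lemma dual_ineq:
  fixes N :: "'a::euclidean_space \<Rightarrow> real"
  assumes "is_norm N"
  shows "g \<bullet> v \<le> dual_norm N g * N v"
proof -
  obtain m where m: "m > 0" "\<forall>x. m * norm x \<le> N x" using N_lower[OF assms] by blast
  have bdd: "bdd_above {g \<bullet> x | x. N x \<le> 1}"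
  proof (rule bdd_aboveI)
    fix y assume "y \<in> {g \<bullet> x | x. N x \<le> 1}"
    then obtain x where x: "y = g \<bullet> x" "N x \<le> 1" by blast
    have "m * norm x \<le> 1" using m x by (meson order_trans)
    then have "norm x \<le> 1 / m" using m(1) by (simp add: field_simps mult.commute)
    have "y \<le> norm g * norm x" using x Cauchy_Schwarz_ineq2 by (metis abs_le_iff norm_cauchy_schwarz)
    also have "\<dots> \<le> norm g * (1/m)" using \<open>norm x \<le> 1/m\<close> by (intro mult_left_mono) simp_all
    finally show "y \<le> norm g * (1/m)" .
  qed
  show ?thesis
  proof (cases "v = 0")
    case True then show ?thesis using N_basic(1)[OF assms] by simp
  next
    case False
    then have Nv: "N v > 0" using N_basic(6,7)[OF assms, of v] by linarith
    define w where "w = inverse (N v) *\<^sub>R v"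
    have "N w = 1" using Nv N_basic(5)[OF assms] by (simp add: w_def)
    then have "g \<bullet> w \<le> dual_norm N g" unfolding dual_norm_def
      by (intro cSup_upper[OF _ bdd]) auto
    then have "g \<bullet> w * N v \<le> dual_norm N g * N v" using Nv by (simp add: mult_right_mono)
    moreover have "g \<bullet> w * N v = g \<bullet> v" using Nv by (simp add: w_def)
    ultimately show ?thesis by simp
  qed
qed

lemma lim_lemma:
  fixes c d :: real
  assumes "\<And>s. 0 < s \<Longrightarrow> s \<le> 1 \<Longrightarrow> (1 - s) * c \<le> d"
  shows "c \<le> d"
proof (rule ccontr)
  assume "\<not> c \<le> d"
  have "0 \<le> d" using assms[of 1] by simp
  define s where "s = (c - d) / (2 * c)"
  have "c > 0" using \<open>\<not> c \<le> d\<close> \<open>0 \<le> d\<close> by simp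
  then have "0 < s" "s \<le> 1" using \<open>\<not> c \<le> d\<close> \<open>0 \<le> d\<close> by (auto simp: s_def field_simps)
  then have "(1 - s) * c \<le> d" by (rule assms)
  moreover have "(1 - s) * c = (c + d) / 2" using \<open>c > 0\<close> by (simp add: s_def field_simps)
  ultimately show False using \<open>\<not> c \<le> d\<close> by simp
qed

lemma sum_inv_sqrt: "(\<Sum>t=1..T. 1 / sqrt (real t)) \<le> 2 * sqrt (real T)"
proof (induction T)
  case 0 then show ?case by simp
next
  case (Suc T)
  have key: "1 / sqrt (real T + 1) \<le> 2 * sqrt (real T + 1) - 2 * sqrt (real T)"
  proof -
    have a: "sqrt (real T) \<le> sqrt (real T + 1)" by simp
    have b: "0 < sqrt (real T + 1)" by simp
    have "sqrt (real T) * sqrt (real T + 1) \<le> real T + 1/2"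
    proof -
      have "(sqrt (real T) * sqrt (real T + 1))^2 = real T * (real T + 1)" by (simp add: power_mult_distrib)
      also have "\<dots> \<le> (real T + 1/2)^2" by (simp add: power2_eq_square algebra_simps)
      finally show ?thesis by (rule power2_le_imp_le) simp
    qed
    then have "1 \<le> 2 * (sqrt (real T + 1))^2 - 2 * sqrt (real T) * sqrt (real T + 1)" by simp
    then have "1 \<le> (2 * sqrt (real T + 1) - 2 * sqrt (real T)) * sqrt (real T + 1)"
      by (simp add: algebra_simps power2_eq_square)
    then show ?thesis using b by (simp add: divide_le_eq)
  qed
  have "(\<Sum>t=1..Suc T. 1 / sqrt (real t)) = (\<Sum>t=1..T. 1 / sqrt (real t)) + 1 / sqrt (real T + 1)"
    by (simp add: add.commute)
  also have "\<dots> \<le> 2 * sqrt (real (Suc T))" using Suc key by (simp add: add.commute)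
  finally show ?case .
qed



lemma quad:
  fixes a k G u :: real
  assumes a: "0 < a" and k: "0 \<le> k"
  shows "(1/(k+1))*(k*G*u - a*u^2/2) - a*(1 - 1/(k+1))*(1/(k+1))*u^2/2 + G*u \<le> (k+1/2)*G^2/a"
proof -
  define q where "q = u / (k+1)"
  have e1: "(1/(k+1))*(k*G*u - a*u^2/2) - a*(1 - 1/(k+1))*(1/(k+1))*u^2/2 + G*u
        = (2*k+1)*(G*q - a*q^2/2)"
  proof -
    define w where "w = 1/(k+1)"
    have w: "w * (k+1) = 1" using k by (simp add: w_def)
    have e: "q = u * w" by (simp add: w_def q_def)
    have "w*(k*G*u - a*u^2/2) - a*(1 - w)*w*u^2/2 + G*u = (2*k+1)*(G*(u*w) - a*(u*w)^2/2)"
      using w by algebra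
    then show ?thesis unfolding e w_def by simp
  qed
  have "G*q - a*q^2/2 \<le> G^2/(2*a)"
  proof -
    have "0 \<le> (G - a*q)^2/(2*a)" using a by simp
    also have "(G - a*q)^2/(2*a) = G^2/(2*a) - (G*q - a*q^2/2)"
      using a by (simp add: field_simps power2_eq_square)
    finally show ?thesis by simp
  qed
  then have "(2*k+1)*(G*q - a*q^2/2) \<le> (2*k+1)*(G^2/(2*a))"
    using k by (intro mult_left_mono) simp_all
  also have "\<dots> = (k+1/2)*G^2/a" using a by (simp add: field_simps)
  finally show ?thesis using e1 by simp
qed

lemma step:
  fixes N :: "'a::euclidean_space \<Rightarrow> real" and h :: "'a \<Rightarrow> ereal"
  assumes norm: "is_norm N" and cvx: "convex X" and sc: "strongly_convex_on X N h"
    and a: "0 < a" and xX: "x \<in> X" and yX: "y \<in> X"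
    and minim: "\<forall>v\<in>X. Ls \<bullet> x + a * real_of_ereal (h x) \<le> Ls \<bullet> v + a * real_of_ereal (h v)"
    and Db: "\<forall>v. D \<bullet> v \<le> k * G * N v" and gb: "\<forall>v. g \<bullet> v \<le> G * N v"
    and k: "0 \<le> k"
  shows "\<exists>z\<in>X. (Ls + D) \<bullet> z + a * real_of_ereal (h z)
      \<le> (Ls + D) \<bullet> y + a * real_of_ereal (h y) + g \<bullet> (y - x) + (k + 1/2) * G^2 / a"
proof -
  define H where "H v = real_of_ereal (h v)" for v
  define \<Phi> where "\<Phi> v = Ls \<bullet> v + a * H v" for v
  define u where "u = N (y - x)"
  have SC: "H (s *\<^sub>R y + (1 - s) *\<^sub>R x) \<le> s * H y + (1 - s) * H x - s * (1 - s) / 2 * u^2"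
    if "0 \<le> s" "s \<le> 1" for s
    using sc xX yX that unfolding strongly_convex_on_def H_def u_def by blast
  have PhiSC: "\<Phi> (s *\<^sub>R y + (1 - s) *\<^sub>R x) \<le> s * \<Phi> y + (1 - s) * \<Phi> x - a * (s * (1 - s) / 2 * u^2)"
    if "0 \<le> s" "s \<le> 1" for s
  proof -
    have "a * H (s *\<^sub>R y + (1 - s) *\<^sub>R x) \<le> a * (s * H y + (1 - s) * H x - s * (1 - s) / 2 * u^2)"
      using SC[OF that] a by (intro mult_left_mono) simp_all
    then show ?thesis unfolding \<Phi>_def by (simp add: inner_add_right algebra_simps)
  qed
  have A: "a / 2 * u^2 \<le> \<Phi> y - \<Phi> x"
  proof (rule lim_lemma)
    fix s :: real assume s: "0 < s" "s \<le> 1"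
    have zX: "s *\<^sub>R y + (1 - s) *\<^sub>R x \<in> X" using cvx xX yX s by (simp add: convex_def)
    have "\<Phi> x \<le> \<Phi> (s *\<^sub>R y + (1 - s) *\<^sub>R x)" using minim zX unfolding \<Phi>_def H_def by blast
    with PhiSC[of s] s have "s * ((1 - s) * (a / 2 * u^2)) \<le> s * (\<Phi> y - \<Phi> x)"
      by (simp add: algebra_simps)
    then show "(1 - s) * (a / 2 * u^2) \<le> \<Phi> y - \<Phi> x" using s by simp
  qed
  define s where "s = k / (k + 1)"
  define z where "z = s *\<^sub>R y + (1 - s) *\<^sub>R x"
  have s01: "0 \<le> s" "s \<le> 1" using k by (auto simp: s_def field_simps)
  have zX: "z \<in> X" using cvx xX yX s01 by (simp add: convex_def z_def)
  have u0: "0 \<le> u" using N_basic(6)[OF norm] by (simp add: u_def)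
  have Dxy: "D \<bullet> (x - y) \<le> k * G * u" using spec[OF Db, of "x - y"] N_basic(3)[OF norm, of y x] by (simp add: u_def)
  have gxy: "g \<bullet> (x - y) \<le> G * u" using spec[OF gb, of "x - y"] N_basic(3)[OF norm, of y x] by (simp add: u_def)
  have Fz: "\<Phi> z + D \<bullet> z = s * (\<Phi> y + D \<bullet> y) + (1 - s) * (\<Phi> x + D \<bullet> x) - s * (1 - s) * (a / 2 * u^2) + (\<Phi> z - (s * \<Phi> y + (1 - s) * \<Phi> x - a * (s * (1 - s) / 2 * u^2)))"
    by (simp add: z_def inner_add_right algebra_simps)
  have PZ: "\<Phi> z - (s * \<Phi> y + (1 - s) * \<Phi> x - a * (s * (1 - s) / 2 * u^2)) \<le> 0"
    using PhiSC[OF s01] by (simp add: z_def)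
  have W: "(1 - s) * (\<Phi> x - \<Phi> y + D \<bullet> (x - y)) \<le> (1 - s) * (- (a / 2 * u^2) + k * G * u)"
    using A Dxy s01 by (intro mult_left_mono) simp_all
  have Q: "(1/(k+1))*(k*G*u - a*u^2/2) - a*(1 - 1/(k+1))*(1/(k+1))*u^2/2 + G*u \<le> (k+1/2)*G^2/a"
    by (rule quad[OF a k])
  have s1: "1 - s = 1/(k+1)" using k by (simp add: s_def field_simps)
  have "\<Phi> z + D \<bullet> z \<le> \<Phi> y + D \<bullet> y + g \<bullet> (y - x) + (k + 1/2) * G^2 / a"
  proof -
    have gyx: "g \<bullet> (y - x) = - (g \<bullet> (x - y))" by (simp add: inner_diff_right)
    have "\<Phi> z + D \<bullet> z \<le> \<Phi> y + D \<bullet> y + (1 - s) * (\<Phi> x - \<Phi> y + D \<bullet> (x - y)) - s * (1 - s) * (a / 2 * u^2)"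
      using Fz PZ by (simp add: inner_diff_right algebra_simps)
    also have "\<dots> \<le> \<Phi> y + D \<bullet> y + (1 - s) * (- (a / 2 * u^2) + k * G * u) - s * (1 - s) * (a / 2 * u^2)"
      using W by simp
    also have "\<dots> \<le> \<Phi> y + D \<bullet> y - G * u + (k + 1/2) * G^2 / a"
    proof -
      have "(1 - s) * (- (a / 2 * u^2) + k * G * u) - s * (1 - s) * (a / 2 * u^2)
          = (1/(k+1))*(k*G*u - a*u^2/2) - a*(1 - 1/(k+1))*(1/(k+1))*u^2/2"
        unfolding s1[symmetric] by (simp add: algebra_simps)
      then show ?thesis using Q by linarith
    qed
    also have "\<dots> \<le> \<Phi> y + D \<bullet> y + g \<bullet> (y - x) + (k + 1/2) * G^2 / a"
      using gxy gyx by simp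
    finally show ?thesis .
  qed
  then show ?thesis using zX unfolding \<Phi>_def H_def by (intro bexI[of _ z]) (simp_all add: inner_add_left algebra_simps)
qed



lemma regret_term:
  assumes "g \<in> subdiff f x" "p \<in> dom_subdiff f"
  shows "real_of_ereal (f x) - real_of_ereal (f p) \<le> g \<bullet> (x - p)"
proof -
  have fx: "f x \<noteq> \<infinity>" "f x \<noteq> -\<infinity>" and ineq: "f x + ereal (g \<bullet> (p - x)) \<le> f p"
    using assms(1) unfolding subdiff_def by auto
  obtain g' where "g' \<in> subdiff f p" using assms(2) unfolding dom_subdiff_def by blast
  then have fp: "f p \<noteq> \<infinity>" unfolding subdiff_def by auto
  obtain A where A: "f x = ereal A" using fx by (cases "f x") auto
  show ?thesis
  proof (cases "f p")
    case (real B)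
    then have "A + g \<bullet> (p - x) \<le> B" using ineq A by simp
    then show ?thesis using A real by (simp add: inner_diff_right)
  next
    case PInf then show ?thesis using fp by simp
  next
    case MInf then show ?thesis using ineq A by simp
  qed
qed

lemma card_missing:
  fixes t \<tau> :: nat
  assumes "{1..t - \<tau> - 1} \<subseteq> S"
  shows "{1..<t} - S \<subseteq> {t - \<tau>..<t}" "card ({1..<t} - S) \<le> \<tau>"
proof -
  show sub: "{1..<t} - S \<subseteq> {t - \<tau>..<t}"
  proof
    fix s assume "s \<in> {1..<t} - S"
    then have "s \<in> {1..<t}" "s \<notin> {1..t - \<tau> - 1}" using assms by auto
    then show "s \<in> {t - \<tau>..<t}" by auto
  qed
  have "card ({1..<t} - S) \<le> card {t - \<tau>..<t}" by (rule card_mono[OF _ sub]) simp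
  also have "\<dots> \<le> \<tau>" by simp
  finally show "card ({1..<t} - S) \<le> \<tau>" .
qed



theorem proposition1:
  fixes N :: "'a::euclidean_space \<Rightarrow> real"
    and X :: "'a set"
    and h :: "'a \<Rightarrow> ereal"
    and f :: "nat \<Rightarrow> 'a \<Rightarrow> ereal"
    and agent :: "nat \<Rightarrow> 'i"
    and S :: "'i \<Rightarrow> nat \<Rightarrow> nat set"
    and x g :: "nat \<Rightarrow> 'a"
    and T \<tau> :: nat
    and r G :: real
    and p :: 'a
  assumes norm: "is_norm N"
    and X_closed: "closed X" and X_convex: "convex X"
    and h_lsc: "lsc_ext h" and h_proper: "proper_ext h"
    and X_dom: "X \<subseteq> edom h"
    and h_sc: "strongly_convex_on X N h"
    and h_sel: "has_continuous_subgrad_selection h"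
    and h_nonneg: "\<And>v. 0 \<le> h v"
    and f_convex: "\<And>t. t \<in> {1..T} \<Longrightarrow> convex_ext (f t)"
    and f_dom: "\<And>t. t \<in> {1..T} \<Longrightarrow> X \<subseteq> dom_subdiff (f t)"
    and S_sub: "\<And>i t. t \<in> {1..T} \<Longrightarrow> S i t \<subseteq> {1..<t}"
    and S_mono: "\<And>i t t'. t \<in> {1..T} \<Longrightarrow> t' \<in> {1..T} \<Longrightarrow> t \<le> t' \<Longrightarrow> S i t \<subseteq> S i t'"
    and g_sub: "\<And>t. t \<in> {1..T} \<Longrightarrow> g t \<in> subdiff (f t) (x t)"
    and delay: "\<And>t. t \<in> {1..T} \<Longrightarrow> {1..t - \<tau> - 1} \<subseteq> S (agent t) t"
    and g_bound: "\<And>t. t \<in> {1..T} \<Longrightarrow> dual_norm N (g t) \<le> G"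
    and r_pos: "0 < r" and G_pos: "0 < G"
    and dda: "\<And>t. t \<in> {1..T} \<Longrightarrow>
       is_argmin_on X
         (\<lambda>y. (\<Sum>s\<in>S (agent t) t. g s \<bullet> y)
              + real_of_ereal (h y) / (r / (G * sqrt (real t * (1 + 2 * real \<tau>))))) (x t)"
    and p_X: "p \<in> X"
    and p_h: "h p \<le> ereal (r\<^sup>2)"
  shows "(\<Sum>t=1..T. real_of_ereal (f t (x t))) - (\<Sum>t=1..T. real_of_ereal (f t p))
           \<le> 2 * r * G * sqrt (real T * (1 + 2 * real \<tau>))"
proof -
  define c where "c = 1 + 2 * real \<tau>"
  define a where "a t = G * sqrt (real t * c) / r" for t :: nat
  define H where "H v = real_of_ereal (h v)" for v
  define L where "L k = (\<Sum>s\<in>{1..<k}. g s)" for k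
  define E where "E t = (real \<tau> + 1/2) * G\<^sup>2 / a t" for t
  have c1: "1 \<le> c" by (simp add: c_def)
  have a_pos: "0 < a t" if "1 \<le> t" for t using that c1 r_pos G_pos by (simp add: a_def)
  have a_mono: "a k \<le> a t" if "k \<le> t" for k t
    using that c1 r_pos G_pos by (simp add: a_def divide_right_mono mult_left_mono)
  have a0: "a 0 = 0" by (simp add: a_def)
  have H0: "0 \<le> H v" for v using h_nonneg[of v] by (simp add: H_def real_of_ereal_pos)
  have gN: "g t \<bullet> v \<le> G * N v" if "t \<in> {1..T}" for t v
  proof -
    have "g t \<bullet> v \<le> dual_norm N (g t) * N v" by (rule dual_ineq[OF norm])
    also have "\<dots> \<le> G * N v" using g_bound[OF that] N_basic(6)[OF norm] by (simp add: mult_right_mono)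
    finally show ?thesis .
  qed
  have stepT: "\<exists>z\<in>X. L t \<bullet> z + a t * H z \<le> L t \<bullet> y + a t * H y + g t \<bullet> (y - x t) + E t"
    if t: "t \<in> {1..T}" and yX: "y \<in> X" for t y
  proof -
    define Sg where "Sg = S (agent t) t"
    define M where "M = {1..<t} - Sg"
    define Ls where "Ls = (\<Sum>s\<in>Sg. g s)"
    define D where "D = (\<Sum>s\<in>M. g s)"
    have SgS: "Sg \<subseteq> {1..<t}" using S_sub[OF t] by (simp add: Sg_def)
    have LD: "L t = D + Ls" unfolding L_def D_def Ls_def M_def
      by (rule sum.subset_diff[OF SgS]) simp
    have am: "is_argmin_on X
         (\<lambda>y. (\<Sum>s\<in>S (agent t) t. g s \<bullet> y)
              + real_of_ereal (h y) / (r / (G * sqrt (real t * (1 + 2 * real \<tau>))))) (x t)"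
      by (rule dda[OF t])
    have fe: "(\<Sum>s\<in>S (agent t) t. g s \<bullet> v) + real_of_ereal (h v) / (r / (G * sqrt (real t * (1 + 2 * real \<tau>))))
        = Ls \<bullet> v + a t * H v" for v
      by (simp add: Ls_def Sg_def inner_sum_left a_def H_def c_def divide_divide_eq_right)
    have xX: "x t \<in> X" and minim: "\<forall>v\<in>X. Ls \<bullet> x t + a t * real_of_ereal (h (x t)) \<le> Ls \<bullet> v + a t * real_of_ereal (h v)"
      using am unfolding is_argmin_on_def fe H_def by auto
    have cardM: "card M \<le> \<tau>" unfolding M_def Sg_def by (rule card_missing(2)[OF delay[OF t]])
    have MT: "M \<subseteq> {1..T}" using t by (auto simp: M_def)
    have Db: "\<forall>v. D \<bullet> v \<le> real \<tau> * G * N v"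
    proof
      fix v
      have "D \<bullet> v = (\<Sum>s\<in>M. g s \<bullet> v)" by (simp add: D_def inner_sum_left)
      also have "\<dots> \<le> (\<Sum>s\<in>M. G * N v)" using MT gN by (intro sum_mono) auto
      also have "\<dots> = real (card M) * (G * N v)" by simp
      also have "\<dots> \<le> real \<tau> * (G * N v)"
        using cardM G_pos N_basic(6)[OF norm, of v] by (intro mult_right_mono) simp_all
      finally show "D \<bullet> v \<le> real \<tau> * G * N v" by simp
    qed
    have gb: "\<forall>v. g t \<bullet> v \<le> G * N v" using gN[OF t] by blast
    have at: "0 < a t" using t a_pos by simp
    obtain z where z: "z \<in> X" "(Ls + D) \<bullet> z + a t * real_of_ereal (h z)
      \<le> (Ls + D) \<bullet> y + a t * real_of_ereal (h y) + g t \<bullet> (y - x t) + (real \<tau> + 1/2) * G\<^sup>2 / a t"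
      using step[OF norm X_convex h_sc at xX yX minim Db gb] by auto
    then show ?thesis unfolding LD E_def H_def by (intro bexI[of _ z]) (simp_all add: add.commute)
  qed
  have claim: "\<forall>y\<in>X. (\<Sum>t\<in>{1..k}. g t \<bullet> x t - E t) \<le> L (Suc k) \<bullet> y + a k * H y" if "k \<le> T" for k
    using that
  proof (induction k)
    case 0 then show ?case using a0 by (simp add: L_def)
  next
    case (Suc k)
    show ?case
    proof
      fix y assume yX: "y \<in> X"
      define t where "t = Suc k"
      have t: "t \<in> {1..T}" using Suc.prems by (simp add: t_def)
      obtain z where z: "z \<in> X" "L t \<bullet> z + a t * H z \<le> L t \<bullet> y + a t * H y + g t \<bullet> (y - x t) + E t"
        using stepT[OF t yX] by blast
      have IH: "(\<Sum>t\<in>{1..k}. g t \<bullet> x t - E t) \<le> L t \<bullet> z + a k * H z"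
        using Suc.IH Suc.prems z(1) by (simp add: t_def)
      have "a k * H z \<le> a t * H z" using a_mono[of k t] H0[of z] by (simp add: t_def mult_right_mono)
      have Lt: "L (Suc t) = L t + g t" unfolding L_def by (simp add: t_def)
      have "(\<Sum>t\<in>{1..Suc k}. g t \<bullet> x t - E t) = (\<Sum>t\<in>{1..k}. g t \<bullet> x t - E t) + (g t \<bullet> x t - E t)"
        by (simp add: t_def)
      also have "\<dots> \<le> L t \<bullet> y + a t * H y + g t \<bullet> (y - x t) + g t \<bullet> x t"
        using IH z(2) \<open>a k * H z \<le> a t * H z\<close> by linarith
      also have "\<dots> = L (Suc t) \<bullet> y + a t * H y" by (simp add: Lt inner_add_left inner_diff_right)
      finally show "(\<Sum>t\<in>{1..Suc k}. g t \<bullet> x t - E t) \<le> L (Suc (Suc k)) \<bullet> y + a (Suc k) * H y"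
        by (simp add: t_def)
    qed
  qed
  have main: "(\<Sum>t\<in>{1..T}. g t \<bullet> x t - E t) \<le> (\<Sum>t\<in>{1..T}. g t \<bullet> p) + a T * H p"
    using claim[of T] p_X by (simp add: L_def atLeastLessThanSuc_atLeastAtMost inner_sum_left)
  have reg: "(\<Sum>t=1..T. real_of_ereal (f t (x t))) - (\<Sum>t=1..T. real_of_ereal (f t p))
      \<le> (\<Sum>t=1..T. g t \<bullet> (x t - p))"
  proof -
    have "(\<Sum>t=1..T. real_of_ereal (f t (x t))) - (\<Sum>t=1..T. real_of_ereal (f t p))
        = (\<Sum>t=1..T. real_of_ereal (f t (x t)) - real_of_ereal (f t p))" by (simp add: sum_subtractf)
    also have "\<dots> \<le> (\<Sum>t=1..T. g t \<bullet> (x t - p))"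
      using g_sub f_dom p_X by (intro sum_mono regret_term) auto
    finally show ?thesis .
  qed
  have Hp: "H p \<le> r\<^sup>2"
  proof (cases "h p")
    case (real v) then show ?thesis using p_h by (simp add: H_def)
  next
    case PInf then show ?thesis using p_h by simp
  next
    case MInf then show ?thesis using h_nonneg[of p] by simp
  qed
  have sc: "sqrt c * sqrt c = c" using c1 by simp
  have Et: "E t = sqrt c * G * r / 2 * (1 / sqrt (real t))" if "1 \<le> t" for t
  proof -
    have tc: "real \<tau> + 1/2 = c / 2" by (simp add: c_def)
    have "E t = (c / 2) * G\<^sup>2 / (G * (sqrt (real t) * sqrt c) / r)"
      unfolding E_def a_def tc by (simp add: real_sqrt_mult)
    also have "\<dots> = (sqrt c * sqrt c / 2) * G\<^sup>2 / (G * (sqrt (real t) * sqrt c) / r)" using sc by simp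
    also have "\<dots> = sqrt c * G * r / 2 * (1 / sqrt (real t))"
      using that c1 G_pos r_pos by (simp add: field_simps power2_eq_square)
    finally show ?thesis .
  qed
  have sumE: "(\<Sum>t\<in>{1..T}. E t) \<le> sqrt c * G * r * sqrt (real T)"
  proof -
    have "(\<Sum>t\<in>{1..T}. E t) = sqrt c * G * r / 2 * (\<Sum>t=1..T. 1 / sqrt (real t))"
      using Et by (simp add: sum_distrib_left)
    also have "\<dots> \<le> sqrt c * G * r / 2 * (2 * sqrt (real T))"
      using sum_inv_sqrt[of T] c1 G_pos r_pos by (intro mult_left_mono) simp_all
    finally show ?thesis by simp
  qed
  have aTH: "a T * H p \<le> sqrt c * G * r * sqrt (real T)"
  proof -
    have "a T * H p \<le> a T * r\<^sup>2" using Hp a_pos[of T] a0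
      by (cases "T = 0") (simp_all add: mult_left_mono)
    also have "\<dots> = sqrt c * G * r * sqrt (real T)"
      using r_pos by (simp add: a_def real_sqrt_mult power2_eq_square)
    finally show ?thesis .
  qed
  have "(\<Sum>t=1..T. g t \<bullet> (x t - p)) = (\<Sum>t\<in>{1..T}. g t \<bullet> x t - E t) - (\<Sum>t\<in>{1..T}. g t \<bullet> p) + (\<Sum>t\<in>{1..T}. E t)"
    by (simp add: inner_diff_right sum_subtractf)
  also have "\<dots> \<le> 2 * (sqrt c * G * r * sqrt (real T))" using main sumE aTH by linarith
  also have "\<dots> = 2 * r * G * sqrt (real T * (1 + 2 * real \<tau>))"
    by (simp add: c_def real_sqrt_mult)
  finally show ?thesis using reg by linarith
qed

end
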